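(* Let $n\ge2$ and $U=\exp\!\big(i\frac{\pi}{3\sqrt3}\sum_{j=1}^n j\,(X_j+Y_j+Z_j)\big)$. Then the map $a\mapsto UaU^\dagger$ restricts to a Lie algebra isomorphism from $\mathfrak a_{10}(n)$ onto $\mathfrak a_7(n)$.
   Context: Pauli matrices $I,X,Y,Z$; $A_j$ is $A$ acting on qubit $j$ (identity elsewhere); $A_jB_{j+1}$ denotes the length-$n$ Pauli string with $A$ at position $j$, $B$ at $j+1$, $I$ elsewhere. For a set $S$ of Pauli strings, $\mathrm{Lie}\langle S\rangle$ is the smallest real Lie subalgebra of $\mathfrak u(2^n)$ containing $\{iP:P\in S\}$. $\mathfrak a_{10}(n)=\mathrm{Lie}\langle X_jY_{j+1},Y_jZ_{j+1},Z_jX_{j+1}:1\le j\le n-1\rangle$ and $\mathfrak a_7(n)=\mathrm{Lie}\langle X_jX_{j+1},Y_jY_{j+1},Z_jZ_{j+1}:1\le j\le n-1\rangle$. *)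

theory Defs
  imports "Jordan_Normal_Form.Matrix" Complex_Main
begin

datatype pauli = PI | PX | PY | PZ

fun pauli_entry :: "pauli \<Rightarrow> nat \<Rightarrow> nat \<Rightarrow> complex" where
  "pauli_entry PI r c = (if r = c then 1 else 0)"
| "pauli_entry PX r c = (if r \<noteq> c then 1 else 0)"
| "pauli_entry PY r c = (if r = c then 0 else if r = 0 then - \<i> else \<i>)"
| "pauli_entry PZ r c = (if r = c then (if r = 0 then 1 else -1) else 0)"

text \<open>Bit of basis index k belonging to qubit j (1 \<le> j \<le> n); qubit 1 is the most significant
  tensor factor.\<close>
definition qbit :: "nat \<Rightarrow> nat \<Rightarrow> nat \<Rightarrow> nat" where
  "qbit n j k = (k div 2 ^ (n - j)) mod 2"

text \<open>The Pauli string (tensor product) with label p j at position j, for j = 1..n,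
  as a 2^n x 2^n complex matrix.\<close>
definition pauli_string :: "nat \<Rightarrow> (nat \<Rightarrow> pauli) \<Rightarrow> complex mat" where
  "pauli_string n p = mat (2 ^ n) (2 ^ n)
     (\<lambda>(r, c). \<Prod>j\<in>{1..n}. pauli_entry (p j) (qbit n j r) (qbit n j c))"

definition single :: "nat \<Rightarrow> pauli \<Rightarrow> nat \<Rightarrow> complex mat" where
  "single n A j = pauli_string n (\<lambda>k. if k = j then A else PI)"

definition two_site :: "nat \<Rightarrow> pauli \<Rightarrow> pauli \<Rightarrow> nat \<Rightarrow> complex mat" where
  "two_site n A B j = pauli_string n (\<lambda>k. if k = j then A else if k = j + 1 then B else PI)"

definition commutator :: "complex mat \<Rightarrow> complex mat \<Rightarrow> complex mat" where
  "commutator a b = a * b - b * a"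

text \<open>Smallest set of N x N complex matrices containing G that is a real subspace
  closed under the commutator bracket (i.e. the real Lie algebra generated by G).\<close>
inductive_set lie_closure :: "nat \<Rightarrow> complex mat set \<Rightarrow> complex mat set"
  for N :: nat and G :: "complex mat set" where
  gen: "a \<in> G \<Longrightarrow> a \<in> lie_closure N G"
| zero: "0\<^sub>m N N \<in> lie_closure N G"
| add: "a \<in> lie_closure N G \<Longrightarrow> b \<in> lie_closure N G \<Longrightarrow> a + b \<in> lie_closure N G"
| smult: "a \<in> lie_closure N G \<Longrightarrow> complex_of_real r \<cdot>\<^sub>m a \<in> lie_closure N G"
| bracket: "a \<in> lie_closure N G \<Longrightarrow> b \<in> lie_closure N G \<Longrightarrow> commutator a b \<in> lie_closure N G"

definition pauli_lie :: "nat \<Rightarrow> complex mat set \<Rightarrow> complex mat set" where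
  "pauli_lie n S = lie_closure (2 ^ n) ((\<lambda>P. \<i> \<cdot>\<^sub>m P) ` S)"

definition a10 :: "nat \<Rightarrow> complex mat set" where
  "a10 n = pauli_lie n (\<Union>j\<in>{1..n-1}.
      {two_site n PX PY j, two_site n PY PZ j, two_site n PZ PX j})"

definition a7 :: "nat \<Rightarrow> complex mat set" where
  "a7 n = pauli_lie n (\<Union>j\<in>{1..n-1}.
      {two_site n PX PX j, two_site n PY PY j, two_site n PZ PZ j})"

definition mat_exp :: "complex mat \<Rightarrow> complex mat" where
  "mat_exp A = mat (dim_row A) (dim_col A) (\<lambda>(i, j). \<Sum>k. (A ^\<^sub>m k) $$ (i, j) / of_nat (fact k))"

definition adjoint :: "complex mat \<Rightarrow> complex mat" where
  "adjoint A = mat (dim_col A) (dim_row A) (\<lambda>(i, j). cnj (A $$ (j, i)))"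

definition mat_sum :: "nat \<Rightarrow> nat \<Rightarrow> (nat \<Rightarrow> complex mat) \<Rightarrow> complex mat" where
  "mat_sum N n f = foldr (\<lambda>j acc. f j + acc) [1..<Suc n] (0\<^sub>m N N)"

definition U_gate :: "nat \<Rightarrow> complex mat" where
  "U_gate n = mat_exp ((\<i> * complex_of_real (pi / (3 * sqrt 3))) \<cdot>\<^sub>m
      mat_sum (2 ^ n) n (\<lambda>j. of_nat j \<cdot>\<^sub>m (single n PX j + single n PY j + single n PZ j)))"

end

theory Submission
  imports Defs
begin



lemma qbit_lt2[simp]: "qbit n j k < 2" by (simp add: qbit_def)

lemma qbit_Suc: "1 \<le> j \<Longrightarrow> j \<le> n \<Longrightarrow> qbit (Suc n) j k = qbit n j (k div 2)"
proof -
  assume a: "1 \<le> j" "j \<le> n"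
  hence "Suc n - j = Suc (n - j)" by simp
  thus ?thesis by (simp add: qbit_def div_mult2_eq)
qed

lemma qbit_last: "qbit (Suc n) (Suc n) k = k mod 2" by (simp add: qbit_def)

lemma sum_split2: "(\<Sum>k<2*(M::nat). F k) = (\<Sum>m<M. F (2*m) + F (2*m+1))"
  by (induction M) (auto simp: sum.distrib add_ac)

lemma sum_bits: "(\<Sum>k<2^n. \<Prod>j\<in>{1..n}. (h::nat\<Rightarrow>nat\<Rightarrow>complex) j (qbit n j k)) = (\<Prod>j\<in>{1..n}. h j 0 + h j 1)"
proof (induction n)
  case 0 then show ?case by simp
next
  case (Suc n)
  have e: "\<And>k. (\<Prod>j\<in>{1..Suc n}. h j (qbit (Suc n) j k)) =
     (\<Prod>j\<in>{1..n}. h j (qbit n j (k div 2))) * h (Suc n) (k mod 2)"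
  proof -
    fix k
    have "(\<Prod>j\<in>{1..Suc n}. h j (qbit (Suc n) j k)) = (\<Prod>j\<in>{1..n}. h j (qbit (Suc n) j k)) * h (Suc n) (qbit (Suc n) (Suc n) k)"
      by (simp add: prod.nat_ivl_Suc' mult.commute)
    also have "(\<Prod>j\<in>{1..n}. h j (qbit (Suc n) j k)) = (\<Prod>j\<in>{1..n}. h j (qbit n j (k div 2)))"
      by (rule prod.cong) (auto simp: qbit_Suc)
    finally show "?thesis k" by (simp add: qbit_last)
  qed
  have "(\<Sum>k<2^Suc n. \<Prod>j\<in>{1..Suc n}. h j (qbit (Suc n) j k))
      = (\<Sum>m<2^n. (\<Prod>j\<in>{1..n}. h j (qbit n j m)) * (h (Suc n) 0 + h (Suc n) 1))"
    unfolding power_Suc sum_split2 e by (simp add: ring_distribs)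
  also have "\<dots> = (\<Prod>j\<in>{1..n}. h j 0 + h j 1) * (h (Suc n) 0 + h (Suc n) 1)"
    by (subst sum_distrib_right[symmetric]) (subst Suc.IH, rule refl)
  finally show ?case by (simp add: prod.nat_ivl_Suc' mult.commute)
qed

lemma qbit_inj: "r < 2^n \<Longrightarrow> c < 2^n \<Longrightarrow> (\<forall>j\<in>{1..n}. qbit n j r = qbit n j c) \<Longrightarrow> r = c"
proof (induction n arbitrary: r c)
  case 0 then show ?case by simp
next
  case (Suc n)
  have "r div 2 = c div 2"
  proof (rule Suc.IH)
    show "\<forall>j\<in>{1..n}. qbit n j (r div 2) = qbit n j (c div 2)"
    proof
      fix j assume j: "j \<in> {1..n}"
      hence "j \<in> {1..Suc n}" by auto
      thus "qbit n j (r div 2) = qbit n j (c div 2)" using Suc.prems(3) j by (auto simp: qbit_Suc[symmetric])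
    qed
  qed (use Suc.prems in auto)
  moreover have "r mod 2 = c mod 2" using bspec[OF Suc.prems(3), of "Suc n"] by (auto simp: qbit_last)
  ultimately show ?case by (metis div_mult_mod_eq)
qed




definition prodmat :: "nat \<Rightarrow> (nat \<Rightarrow> complex mat) \<Rightarrow> complex mat" where
  "prodmat n f = mat (2^n) (2^n) (\<lambda>(r,c). \<Prod>j\<in>{1..n}. f j $$ (qbit n j r, qbit n j c))"

definition diagmat :: "nat \<Rightarrow> (nat \<Rightarrow> complex) \<Rightarrow> complex mat" where
  "diagmat N d = mat N N (\<lambda>(r,c). if r = c then d r else 0)"

lemma prodmat_carrier[simp]: "prodmat n f \<in> carrier_mat (2^n) (2^n)"
  by (simp add: prodmat_def)
lemma prodmat_dim[simp]: "dim_row (prodmat n f) = 2^n" "dim_col (prodmat n f) = 2^n"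
  by (simp_all add: prodmat_def)
lemma prodmat_index: "r < 2^n \<Longrightarrow> c < 2^n \<Longrightarrow>
   prodmat n f $$ (r,c) = (\<Prod>j\<in>{1..n}. f j $$ (qbit n j r, qbit n j c))"
  by (simp add: prodmat_def)

lemma diagmat_carrier[simp]: "diagmat N d \<in> carrier_mat N N"
  by (simp add: diagmat_def)
lemma diagmat_dim[simp]: "dim_row (diagmat N d) = N" "dim_col (diagmat N d) = N"
  by (simp_all add: diagmat_def)

lemma mult2_index: "A \<in> carrier_mat 2 2 \<Longrightarrow> B \<in> carrier_mat 2 2 \<Longrightarrow> a < 2 \<Longrightarrow> b < 2 \<Longrightarrow>
   (A * B) $$ (a,b) = A $$ (a,0) * B $$ (0,b) + A $$ (a,1) * B $$ (1,b)"
  by (simp add: scalar_prod_def numeral_2_eq_2)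

lemma prodmat_mult:
  assumes "\<And>j. j \<in> {1..n} \<Longrightarrow> f j \<in> carrier_mat 2 2" "\<And>j. j \<in> {1..n} \<Longrightarrow> g j \<in> carrier_mat 2 2"
  shows "prodmat n f * prodmat n g = prodmat n (\<lambda>j. f j * g j)"
proof (rule eq_matI)
  fix r c assume r: "r < dim_row (prodmat n (\<lambda>j. f j * g j))" and c: "c < dim_col (prodmat n (\<lambda>j. f j * g j))"
  hence r': "r < 2^n" and c': "c < 2^n" by auto
  have "(prodmat n f * prodmat n g) $$ (r,c) = (\<Sum>k<2^n. prodmat n f $$ (r,k) * prodmat n g $$ (k,c))"
    using r' c' by (simp add: scalar_prod_def atLeast0LessThan)
  also have "\<dots> = (\<Sum>k<2^n. \<Prod>j\<in>{1..n}. (\<lambda>j b. f j $$ (qbit n j r, b) * g j $$ (b, qbit n j c)) j (qbit n j k))"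
    using r' c' by (intro sum.cong refl) (simp add: prodmat_index prod.distrib)
  also have "\<dots> = (\<Prod>j\<in>{1..n}. f j $$ (qbit n j r, 0) * g j $$ (0, qbit n j c) + f j $$ (qbit n j r, 1) * g j $$ (1, qbit n j c))"
    by (rule sum_bits)
  also have "\<dots> = prodmat n (\<lambda>j. f j * g j) $$ (r,c)"
    using r' c' assms by (simp add: prodmat_index mult2_index)
  finally show "(prodmat n f * prodmat n g) $$ (r,c) = prodmat n (\<lambda>j. f j * g j) $$ (r,c)" .
qed auto

lemma prodmat_one: assumes "\<And>j. j \<in> {1..n} \<Longrightarrow> f j = 1\<^sub>m 2"
  shows "prodmat n f = 1\<^sub>m (2^n)"
proof (rule eq_matI)
  fix r c assume "r < dim_row (1\<^sub>m (2^n) :: complex mat)" "c < dim_col (1\<^sub>m (2^n) :: complex mat)"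
  hence r: "r < 2^n" and c: "c < 2^n" by auto
  show "prodmat n f $$ (r,c) = 1\<^sub>m (2^n) $$ (r,c)"
  proof (cases "r = c")
    case True thus ?thesis using r c assms by (simp add: prodmat_index)
  next
    case False
    then obtain j where j: "j \<in> {1..n}" "qbit n j r \<noteq> qbit n j c" using qbit_inj[OF r c] by blast
    have "prodmat n f $$ (r,c) = 0"
      using r c j assms by (simp add: prodmat_index) (use j in auto)
    thus ?thesis using False r c by simp
  qed
qed auto

lemma prodmat_diag: assumes "\<And>j. j \<in> {1..n} \<Longrightarrow> f j \<in> carrier_mat 2 2"
  "\<And>j. j \<in> {1..n} \<Longrightarrow> f j $$ (0,1) = 0" "\<And>j. j \<in> {1..n} \<Longrightarrow> f j $$ (1,0) = 0"
  shows "prodmat n f = diagmat (2^n) (\<lambda>r. \<Prod>j\<in>{1..n}. f j $$ (qbit n j r, qbit n j r))"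
proof (rule eq_matI)
  fix r c assume "r < dim_row (diagmat (2^n) (\<lambda>r. \<Prod>j\<in>{1..n}. f j $$ (qbit n j r, qbit n j r)))"
     "c < dim_col (diagmat (2^n) (\<lambda>r. \<Prod>j\<in>{1..n}. f j $$ (qbit n j r, qbit n j r)))"
  hence r: "r < 2^n" and c: "c < 2^n" by auto
  show "prodmat n f $$ (r,c) = diagmat (2^n) (\<lambda>r. \<Prod>j\<in>{1..n}. f j $$ (qbit n j r, qbit n j r)) $$ (r,c)"
  proof (cases "r = c")
    case True thus ?thesis using r c assms by (simp add: prodmat_index diagmat_def)
  next
    case False
    then obtain j where j: "j \<in> {1..n}" "qbit n j r \<noteq> qbit n j c" using qbit_inj[OF r c] by blast
    have q: "qbit n j r < 2" "qbit n j c < 2" by auto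
    have "f j $$ (qbit n j r, qbit n j c) = 0"
      using j q assms(2,3)[OF j(1)] by (auto simp: less_2_cases_iff)
    hence "prodmat n f $$ (r,c) = 0"
      using r c j by (simp add: prodmat_index) (use j in auto)
    thus ?thesis using False r c by (simp add: diagmat_def)
  qed
qed auto

lemma adjoint_carrier[simp]: "dim_row (adjoint A) = dim_col A" "dim_col (adjoint A) = dim_row A"
  by (simp_all add: adjoint_def)

lemma adjoint_index: "i < dim_col A \<Longrightarrow> j < dim_row A \<Longrightarrow> adjoint A $$ (i,j) = cnj (A $$ (j,i))"
  by (simp add: adjoint_def)

lemma prodmat_adjoint: assumes "\<And>j. j \<in> {1..n} \<Longrightarrow> f j \<in> carrier_mat 2 2"
  shows "adjoint (prodmat n f) = prodmat n (\<lambda>j. adjoint (f j))"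
proof (rule eq_matI)
  fix r c assume "r < dim_row (prodmat n (\<lambda>j. adjoint (f j)))" "c < dim_col (prodmat n (\<lambda>j. adjoint (f j)))"
  hence r: "r < 2^n" and c: "c < 2^n" by auto
  show "adjoint (prodmat n f) $$ (r,c) = prodmat n (\<lambda>j. adjoint (f j)) $$ (r,c)"
  proof -
    have "adjoint (prodmat n f) $$ (r,c) = (\<Prod>j\<in>{1..n}. cnj (f j $$ (qbit n j c, qbit n j r)))"
      using r c by (simp add: adjoint_index prodmat_index)
    also have "\<dots> = (\<Prod>j\<in>{1..n}. adjoint (f j) $$ (qbit n j r, qbit n j c))"
    proof (rule prod.cong[OF refl])
      fix j assume "j \<in> {1..n}"
      hence "f j \<in> carrier_mat 2 2" by (rule assms)
      thus "cnj (f j $$ (qbit n j c, qbit n j r)) = adjoint (f j) $$ (qbit n j r, qbit n j c)"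
        by (simp add: adjoint_index)
    qed
    finally show ?thesis using r c by (simp add: prodmat_index)
  qed
qed auto

lemma mult_diag_index: assumes "B \<in> carrier_mat N N" "C \<in> carrier_mat N N" "r < N" "c < N"
  shows "(B * diagmat N d * C) $$ (r,c) = (\<Sum>a<N. B $$ (r,a) * d a * C $$ (a,c))"
proof -
  have "(B * diagmat N d * C) $$ (r,c) = (\<Sum>a<N. (B * diagmat N d) $$ (r,a) * C $$ (a,c))"
    using assms by (simp add: scalar_prod_def atLeast0LessThan)
  also have "\<dots> = (\<Sum>a<N. B $$ (r,a) * d a * C $$ (a,c))"
  proof (intro sum.cong refl)
    fix a assume a: "a \<in> {..<N}"
    have "(B * diagmat N d) $$ (r,a) = (\<Sum>b<N. B $$ (r,b) * (if b = a then d b else 0))"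
      using assms a by (simp add: scalar_prod_def atLeast0LessThan diagmat_def)
    also have "\<dots> = B $$ (r,a) * d a" using a
      by (simp add: if_distrib cong: if_cong) 
    finally show "(B * diagmat N d) $$ (r,a) * C $$ (a,c) = B $$ (r,a) * d a * C $$ (a,c)" by simp
  qed
  finally show ?thesis .
qed




definition mk2 :: "complex \<Rightarrow> complex \<Rightarrow> complex \<Rightarrow> complex \<Rightarrow> complex mat" where
  "mk2 a b c d = mat 2 2 (\<lambda>(i,j). if i = 0 then (if j = 0 then a else b) else (if j = 0 then c else d))"

lemma mk2_carrier[simp]: "mk2 a b c d \<in> carrier_mat 2 2" by (simp add: mk2_def)
lemma mk2_dim[simp]: "dim_row (mk2 a b c d) = 2" "dim_col (mk2 a b c d) = 2" by (simp_all add: mk2_def)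
lemma mk2_index[simp]: "mk2 a b c d $$ (0,0) = a" "mk2 a b c d $$ (0,1) = b"
  "mk2 a b c d $$ (1,0) = c" "mk2 a b c d $$ (1,1) = d"
  by (simp_all add: mk2_def)

lemma less2: "(i::nat) < 2 \<longleftrightarrow> i = 0 \<or> i = 1" by auto

lemma mk2_eta: assumes "A \<in> carrier_mat 2 2"
  shows "A = mk2 (A $$ (0,0)) (A $$ (0,1)) (A $$ (1,0)) (A $$ (1,1))"
  by (rule eq_matI) (use assms in \<open>auto simp: mk2_def less2\<close>)

lemma mk2_mult[simp]: "mk2 a b c d * mk2 e f g h = mk2 (a*e+b*g) (a*f+b*h) (c*e+d*g) (c*f+d*h)"
  by (rule eq_matI) (auto simp: less2 mk2_def scalar_prod_def numeral_2_eq_2)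

lemma mk2_adj[simp]: "adjoint (mk2 a b c d) = mk2 (cnj a) (cnj c) (cnj b) (cnj d)"
  by (rule eq_matI) (auto simp: less2 adjoint_def mk2_def)

lemma mk2_eq_iff[simp]: "mk2 a b c d = mk2 a' b' c' d' \<longleftrightarrow> a = a' \<and> b = b' \<and> c = c' \<and> d = d'"
  by (metis mk2_index)

lemma one2: "1\<^sub>m 2 = mk2 1 0 0 1"
  by (rule eq_matI) (auto simp: less2 mk2_def)

definition pmat :: "pauli \<Rightarrow> complex mat" where
  "pmat P = mat 2 2 (\<lambda>(a,b). pauli_entry P a b)"

lemma pmat_mk2: "pmat PI = mk2 1 0 0 1" "pmat PX = mk2 0 1 1 0" "pmat PY = mk2 0 (-\<i>) \<i> 0"
  "pmat PZ = mk2 1 0 0 (-1)"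
  by (rule eq_matI; auto simp: less2 mk2_def pmat_def)+

fun cyc :: "pauli \<Rightarrow> pauli" where
  "cyc PI = PI" | "cyc PX = PZ" | "cyc PZ = PY" | "cyc PY = PX"

definition u1 :: "complex mat" where
  "u1 = mk2 ((1+\<i>)/2) ((1+\<i>)/2) ((-1+\<i>)/2) ((1-\<i>)/2)"

lemma u1_conj: "u1 * pmat P * adjoint u1 = pmat (cyc P)"
  by (cases P) (auto simp: u1_def pmat_mk2 field_simps complex_eq_iff)

lemma u1_unit: "u1 * adjoint u1 = 1\<^sub>m 2" "adjoint u1 * u1 = 1\<^sub>m 2"
  by (auto simp: u1_def one2 field_simps complex_eq_iff)




lemma adjoint_mult: assumes "A \<in> carrier_mat n k" "B \<in> carrier_mat k m"
  shows "adjoint (A * B) = adjoint B * adjoint A"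
proof (rule eq_matI)
  fix i j assume "i < dim_row (adjoint B * adjoint A)" "j < dim_col (adjoint B * adjoint A)"
  hence i: "i < m" and j: "j < n" using assms by auto
  have "adjoint (A * B) $$ (i,j) = cnj (\<Sum>l\<in>{0..<k}. A $$ (j,l) * B $$ (l,i))"
    using assms i j by (simp add: adjoint_index scalar_prod_def)
  also have "\<dots> = (\<Sum>l\<in>{0..<k}. adjoint B $$ (i,l) * adjoint A $$ (l,j))"
    using assms i j by (simp add: adjoint_index mult.commute)
  also have "\<dots> = (adjoint B * adjoint A) $$ (i,j)"
    using assms i j by (simp add: scalar_prod_def)
  finally show "adjoint (A * B) $$ (i,j) = (adjoint B * adjoint A) $$ (i,j)" .
qed (use assms in auto)

lemma adjoint_carrier_mat[simp]: "A \<in> carrier_mat n m \<Longrightarrow> adjoint A \<in> carrier_mat m n"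
  unfolding carrier_mat_def adjoint_def by auto

lemma adjoint_one[simp]: "adjoint (1\<^sub>m n) = (1\<^sub>m n :: complex mat)"
  by (rule eq_matI) (auto simp: adjoint_def)

definition rot :: "nat \<Rightarrow> pauli \<Rightarrow> pauli" where "rot j = cyc ^^ j"

lemma u1_carrier[simp]: "u1 \<in> carrier_mat 2 2" by (simp add: u1_def)
lemma u1_dim[simp]: "dim_row u1 = 2" "dim_col u1 = 2" by (simp_all add: u1_def)
lemma pmat_dim[simp]: "dim_row (pmat P) = 2" "dim_col (pmat P) = 2" by (simp_all add: pmat_def)
lemma pmat_carrier[simp]: "pmat P \<in> carrier_mat 2 2" by (simp add: pmat_def)

lemma upow_carrier[simp]: "u1 ^\<^sub>m j \<in> carrier_mat 2 2"
  using pow_mat_dim_square[OF u1_carrier, of j] by (simp only: carrier_mat_def mem_Collect_eq)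

lemma conj_step: assumes "A \<in> carrier_mat 2 2" "B \<in> carrier_mat 2 2" "C \<in> carrier_mat 2 2"
  shows "(A * B) * C * adjoint (A * B) = A * (B * C * adjoint B) * adjoint A"
proof -
  have "adjoint (A * B) = adjoint B * adjoint A" by (rule adjoint_mult[OF assms(1,2)])
  moreover have "adjoint A \<in> carrier_mat 2 2" "adjoint B \<in> carrier_mat 2 2" using assms by auto
  ultimately show ?thesis using assms
    by (simp add: assoc_mult_mat[of _ 2 2 _ 2 _ 2] mult_carrier_mat[of _ 2 2 _ 2])
qed

lemma upow_conj: "u1 ^\<^sub>m j * pmat P * adjoint (u1 ^\<^sub>m j) = pmat (rot j P)"
proof (induction j arbitrary: P)
  case 0 then show ?case by (simp add: rot_def)
next
  case (Suc j)
  have "u1 ^\<^sub>m Suc j * pmat P * adjoint (u1 ^\<^sub>m Suc j)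
      = u1 ^\<^sub>m j * (u1 * pmat P * adjoint u1) * adjoint (u1 ^\<^sub>m j)"
    unfolding pow_mat.simps by (rule conj_step) auto
  also have "\<dots> = pmat (rot j (cyc P))" by (simp only: u1_conj Suc)
  finally show ?case by (simp only: rot_def funpow_Suc_right o_apply)
qed

lemma rot_PI[simp]: "rot j PI = PI"
  by (induction j) (auto simp: rot_def)

lemma upow_unit1: "u1 ^\<^sub>m j * adjoint (u1 ^\<^sub>m j) = 1\<^sub>m 2"
  using upow_conj[of j PI] by (simp add: pmat_mk2 one2[symmetric])

lemma adj_step: assumes "A \<in> carrier_mat 2 2" "B \<in> carrier_mat 2 2"
  shows "adjoint (A * B) * (A * B) = adjoint B * (adjoint A * A) * B"
proof -
  have "adjoint (A * B) = adjoint B * adjoint A" by (rule adjoint_mult[OF assms(1,2)])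
  moreover have "adjoint A \<in> carrier_mat 2 2" "adjoint B \<in> carrier_mat 2 2" using assms by auto
  ultimately show ?thesis using assms
    by (simp add: assoc_mult_mat[of _ 2 2 _ 2 _ 2] mult_carrier_mat[of _ 2 2 _ 2])
qed

lemma upow_unit2: "adjoint (u1 ^\<^sub>m j) * u1 ^\<^sub>m j = 1\<^sub>m 2"
proof (induction j)
  case 0 show ?case by simp
next
  case (Suc j)
  have "adjoint (u1 ^\<^sub>m Suc j) * u1 ^\<^sub>m Suc j = adjoint u1 * (adjoint (u1 ^\<^sub>m j) * u1 ^\<^sub>m j) * u1"
    unfolding pow_mat.simps by (rule adj_step) auto
  also have "\<dots> = 1\<^sub>m 2" by (simp add: Suc u1_unit)
  finally show ?case .
qed




definition sq3 :: complex where "sq3 = complex_of_real (sqrt 3)"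
lemma sq3_sq: "sq3 * sq3 = 3"
  by (simp add: sq3_def of_real_mult[symmetric])
lemma sq3_nz: "sq3 \<noteq> 0" by (simp add: sq3_def)
lemma one_minus_i_nz: "1 - \<i> \<noteq> 0" by (simp add: complex_eq_iff)

definition Wm :: "complex mat" where "Wm = mk2 (1-\<i>) (\<i>-1) (sq3-1) (sq3+1)"
definition dl :: complex where "dl = 2 * sq3 * (1 - \<i>)"
definition Vm :: "complex mat" where
  "Vm = mk2 ((sq3+1)/dl) ((1-\<i>)/dl) ((1-sq3)/dl) ((1-\<i>)/dl)"
lemma dl_nz: "dl \<noteq> 0" using sq3_nz one_minus_i_nz by (simp add: dl_def)

lemma VW: "Vm * Wm = 1\<^sub>m 2"
proof -
  have "Vm * Wm = mk2 1 0 0 1"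
    using dl_nz sq3_sq unfolding Vm_def Wm_def mk2_mult mk2_eq_iff
    by (simp add: field_simps dl_def; algebra)
  thus ?thesis by (simp add: one2)
qed

lemma WV: "Wm * Vm = 1\<^sub>m 2"
proof -
  have "Wm * Vm = mk2 1 0 0 1"
    using dl_nz sq3_sq unfolding Vm_def Wm_def mk2_mult mk2_eq_iff
    by (simp add: field_simps dl_def; algebra)
  thus ?thesis by (simp add: one2)
qed

definition Sm :: "complex mat" where "Sm = mk2 1 (1-\<i>) (1+\<i>) (-1)"

lemma Sm_pauli: "pmat PX + pmat PY + pmat PZ = Sm"
  by (simp add: pmat_mk2 Sm_def mk2_def; rule eq_matI; auto simp: less2)

lemma WDV: "Wm * mk2 sq3 0 0 (-sq3) * Vm = Sm"
  using dl_nz sq3_sq unfolding Vm_def Wm_def Sm_def mk2_mult mk2_eq_iff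
  by (simp add: field_simps dl_def; algebra)

definition om :: complex where "om = 1/2 + \<i> * sq3 / 2"

lemma WOV: "Wm * mk2 om 0 0 (cnj om) * Vm = u1"
proof -
  have c: "cnj om = 1/2 - \<i> * sq3 / 2" by (simp add: om_def sq3_def)
  show ?thesis
  using dl_nz sq3_sq unfolding c Vm_def Wm_def u1_def mk2_mult mk2_eq_iff
  by (simp add: field_simps dl_def om_def; algebra)
qed




lemma mat_sum_gen:
  assumes "\<And>j. f j \<in> carrier_mat N N"
  shows "foldr (\<lambda>j acc. f j + acc) xs (0\<^sub>m N N) \<in> carrier_mat N N \<and>
    (\<forall>r c. r < N \<longrightarrow> c < N \<longrightarrow> foldr (\<lambda>j acc. f j + acc) xs (0\<^sub>m N N) $$ (r,c) = sum_list (map (\<lambda>j. f j $$ (r,c)) xs))"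
proof (induction xs)
  case Nil then show ?case by simp
next
  case (Cons a xs)
  then show ?case using assms[of a] by auto
qed

lemma mat_sum_carrier: "(\<And>j. f j \<in> carrier_mat N N) \<Longrightarrow> mat_sum N n f \<in> carrier_mat N N"
  unfolding mat_sum_def using mat_sum_gen by blast

lemma mat_sum_index: "(\<And>j. f j \<in> carrier_mat N N) \<Longrightarrow> r < N \<Longrightarrow> c < N \<Longrightarrow>
   mat_sum N n f $$ (r,c) = (\<Sum>j\<in>{1..n}. f j $$ (r,c))"
proof -
  assume a: "\<And>j. f j \<in> carrier_mat N N" "r < N" "c < N"
  have "mat_sum N n f $$ (r,c) = sum_list (map (\<lambda>j. f j $$ (r,c)) [1..<Suc n])"
    using mat_sum_gen[of f N "[1..<Suc n]"] a unfolding mat_sum_def by blast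
  also have "\<dots> = (\<Sum>j\<in>{1..<Suc n}. f j $$ (r,c))" by (simp add: sum_set_upt_conv_sum_list_nat[symmetric])
  also have "{1..<Suc n} = {1..n}" by auto
  finally show ?thesis .
qed

lemma pauli_string_prodmat: "pauli_string n p = prodmat n (\<lambda>k. pmat (p k))"
  unfolding pauli_string_def prodmat_def pmat_def by (rule cong[of "mat _ _"], simp, auto)

lemma pauli_string_carrier[simp]: "pauli_string n p \<in> carrier_mat (2^n) (2^n)"
  by (simp add: pauli_string_def)

lemma prodmat_add:
  assumes j: "j \<in> {1..n}" and fg: "\<And>k. k \<noteq> j \<Longrightarrow> f k = h k" "\<And>k. k \<noteq> j \<Longrightarrow> g k = h k"
    and c: "f j \<in> carrier_mat 2 2" "g j \<in> carrier_mat 2 2" and hj: "h j = f j + g j"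
  shows "prodmat n f + prodmat n g = prodmat n h"
proof (rule eq_matI)
  fix r c assume "r < dim_row (prodmat n h)" "c < dim_col (prodmat n h)"
  hence r: "r < 2^n" and c': "c < 2^n" by auto
  let ?R = "\<lambda>F. \<Prod>k\<in>{1..n}-{j}. F k $$ (qbit n k r, qbit n k c)"
  have sp: "\<And>F. (\<Prod>k\<in>{1..n}. F k $$ (qbit n k r, qbit n k c)) = F j $$ (qbit n j r, qbit n j c) * ?R F"
    using j by (simp add: prod.remove)
  have "?R f = ?R h" "?R g = ?R h" using fg by (auto intro!: prod.cong)
  moreover have "h j $$ (qbit n j r, qbit n j c) = f j $$ (qbit n j r, qbit n j c) + g j $$ (qbit n j r, qbit n j c)"
    using c hj by simp
  ultimately show "(prodmat n f + prodmat n g) $$ (r,c) = prodmat n h $$ (r,c)"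
  proof -
    have "(prodmat n f + prodmat n g) $$ (r,c) = prodmat n f $$ (r,c) + prodmat n g $$ (r,c)"
      using r c' by simp
    also have "\<dots> = f j $$ (qbit n j r, qbit n j c) * ?R f + g j $$ (qbit n j r, qbit n j c) * ?R g"
      using r c' by (simp only: prodmat_index sp)
    also have "\<dots> = h j $$ (qbit n j r, qbit n j c) * ?R h"
      using calculation \<open>?R f = ?R h\<close> \<open>?R g = ?R h\<close> \<open>h j $$ _ = _\<close> by (simp add: distrib_right)
    also have "\<dots> = prodmat n h $$ (r,c)" using r c' by (simp only: prodmat_index sp)
    finally show ?thesis .
  qed
qed auto

lemma conj_cancel: fixes W V A B :: "complex mat" assumes "W \<in> carrier_mat N N" "V \<in> carrier_mat N N" "V * W = 1\<^sub>m N"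
  "A \<in> carrier_mat N N" "B \<in> carrier_mat N N"
  shows "(W * A * V) * (W * B * V) = W * (A * B) * V"
proof -
  have vw: "V * (W * X) = X" if "X \<in> carrier_mat N N" for X
  proof -
    have "V * (W * X) = (V * W) * X" using assms that by (metis assoc_mult_mat)
    thus ?thesis using assms that by (simp add: left_mult_one_mat)
  qed
  show ?thesis using assms
    by (simp add: assoc_mult_mat[of _ N N _ N _ N] mult_carrier_mat[of _ N N _ N] vw)
qed

lemma diagmat_mult: "diagmat N d * diagmat N e = diagmat N (\<lambda>r. d r * e r)"
proof (rule eq_matI)
  fix i j assume "i < dim_row (diagmat N (\<lambda>r. d r * e r))" "j < dim_col (diagmat N (\<lambda>r. d r * e r))"
  hence i: "i < N" and j: "j < N" by auto
  have "(diagmat N d * diagmat N e) $$ (i,j) = (\<Sum>a\<in>{0..<N}. (if i = a then d i else 0) * (if a = j then e a else 0))"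
    using i j by (simp add: scalar_prod_def diagmat_def)
  also have "\<dots> = (\<Sum>a\<in>{0..<N}. if a = i then (if i = j then d i * e i else 0) else 0)"
    by (rule sum.cong) auto
  also have "\<dots> = diagmat N (\<lambda>r. d r * e r) $$ (i,j)" using i j by (simp add: diagmat_def)
  finally show "(diagmat N d * diagmat N e) $$ (i,j) = diagmat N (\<lambda>r. d r * e r) $$ (i,j)" .
qed auto

lemma diagmat_one: "diagmat N (\<lambda>_. 1) = 1\<^sub>m N"
  by (rule eq_matI) (auto simp: diagmat_def)

lemma WV_cancel: "(Wm * A * Vm) * (Wm * B * Vm) = Wm * (A * B) * Vm" if "A \<in> carrier_mat 2 2" "B \<in> carrier_mat 2 2"
  by (rule conj_cancel[OF _ _ VW that]) (auto simp: Wm_def Vm_def)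

lemma WOV_pow: "Wm * mk2 (om ^ j) 0 0 (cnj om ^ j) * Vm = u1 ^\<^sub>m j"
proof (induction j)
  case 0 show ?case using WV by (simp add: one2[symmetric] Wm_def)
next
  case (Suc j)
  have "Wm * mk2 (om ^ Suc j) 0 0 (cnj om ^ Suc j) * Vm
     = (Wm * mk2 (om ^ j) 0 0 (cnj om ^ j) * Vm) * (Wm * mk2 om 0 0 (cnj om) * Vm)"
    by (subst WV_cancel) (auto simp: mult.commute)
  thus ?case by (simp add: Suc WOV mult.commute)
qed




definition WW :: "nat \<Rightarrow> complex mat" where "WW n = prodmat n (\<lambda>_. Wm)"
definition VV :: "nat \<Rightarrow> complex mat" where "VV n = prodmat n (\<lambda>_. Vm)"
definition Dd :: "complex mat" where "Dd = mk2 sq3 0 0 (-sq3)"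
definition dd :: "nat \<Rightarrow> complex" where "dd b = (if b = 0 then sq3 else - sq3)"

lemma mk2_index_Suc[simp]: "mk2 a b c d $$ (0,Suc 0) = b"
  "mk2 a b c d $$ (Suc 0,0) = c" "mk2 a b c d $$ (Suc 0,Suc 0) = d"
  by (simp_all add: mk2_def)

lemma Wm_carrier[simp]: "Wm \<in> carrier_mat 2 2" by (simp add: Wm_def)
lemma Vm_carrier[simp]: "Vm \<in> carrier_mat 2 2" by (simp add: Vm_def)

lemma WW_carrier[simp]: "WW n \<in> carrier_mat (2^n) (2^n)" by (simp add: WW_def)
lemma VV_carrier[simp]: "VV n \<in> carrier_mat (2^n) (2^n)" by (simp add: VV_def)

lemma WW_dim[simp]: "dim_row (WW n) = 2^n" "dim_col (WW n) = 2^n" "dim_row (VV n) = 2^n" "dim_col (VV n) = 2^n"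
  by (simp_all add: WW_def VV_def)

lemma VVWW: "VV n * WW n = 1\<^sub>m (2^n)"
  unfolding VV_def WW_def by (subst prodmat_mult) (auto intro: prodmat_one simp: VW)

lemma single_prodmat: "single n P j = prodmat n (\<lambda>k. if k = j then pmat P else pmat PI)"
  unfolding single_def pauli_string_prodmat by (rule arg_cong[where f="prodmat n"]) auto

definition Sj :: "nat \<Rightarrow> nat \<Rightarrow> complex mat" where
  "Sj n j = single n PX j + single n PY j + single n PZ j"

lemma Sj_carrier[simp]: "Sj n j \<in> carrier_mat (2^n) (2^n)"
  by (simp add: Sj_def single_def)

lemma Sj_dim[simp]: "dim_row (Sj n j) = 2^n" "dim_col (Sj n j) = 2^n"
  using Sj_carrier[of n j] unfolding carrier_mat_def by auto

lemma Sj_prodmat: assumes j: "j \<in> {1..n}"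
  shows "Sj n j = prodmat n (\<lambda>k. if k = j then Sm else 1\<^sub>m 2)"
proof -
  have "single n PX j + single n PY j = prodmat n (\<lambda>k. if k = j then pmat PX + pmat PY else pmat PI)"
    unfolding single_prodmat by (rule prodmat_add[OF j]) auto
  hence "Sj n j = prodmat n (\<lambda>k. if k = j then pmat PX + pmat PY else pmat PI) + single n PZ j"
    by (simp add: Sj_def)
  also have "\<dots> = prodmat n (\<lambda>k. if k = j then pmat PX + pmat PY + pmat PZ else pmat PI)"
    unfolding single_prodmat by (rule prodmat_add[OF j]) (auto simp: pmat_def)
  finally show ?thesis by (simp only: Sm_pauli pmat_mk2(1) one2[symmetric])
qed

lemma Sj_eq: assumes j: "j \<in> {1..n}"
  shows "Sj n j = WW n * diagmat (2^n) (\<lambda>r. dd (qbit n j r)) * VV n"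
proof -
  let ?X = "\<lambda>k. if k = j then Dd else 1\<^sub>m 2"
  have X: "\<And>k. ?X k \<in> carrier_mat 2 2" by (auto simp: Dd_def)
  have "Sj n j = prodmat n (\<lambda>k. Wm * ?X k * Vm)"
    unfolding Sj_prodmat[OF j]
    by (rule arg_cong[where f="prodmat n"], rule ext) (auto simp: WDV[folded Dd_def] WV right_mult_one_mat[OF Wm_carrier])
  also have "\<dots> = WW n * prodmat n ?X * VV n"
    unfolding WW_def VV_def using X
    by (subst prodmat_mult, auto, subst prodmat_mult, auto simp: mult_carrier_mat[of _ 2 2 _ 2] Dd_def)
  also have "prodmat n ?X = diagmat (2^n) (\<lambda>r. \<Prod>k\<in>{1..n}. ?X k $$ (qbit n k r, qbit n k r))"
    by (rule prodmat_diag) (auto simp: Dd_def)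
  also have "(\<lambda>r. \<Prod>k\<in>{1..n}. ?X k $$ (qbit n k r, qbit n k r)) = (\<lambda>r. dd (qbit n j r))"
  proof
    fix r
    have "(\<Prod>k\<in>{1..n}. ?X k $$ (qbit n k r, qbit n k r)) = (\<Prod>k\<in>{1..n}. if k = j then Dd $$ (qbit n j r, qbit n j r) else 1)"
      by (rule prod.cong) auto
    also have "\<dots> = Dd $$ (qbit n j r, qbit n j r)" using j by simp
    also have "\<dots> = dd (qbit n j r)" using qbit_lt2[of n j r] by (auto simp: Dd_def dd_def less2)
    finally show "(\<Prod>k\<in>{1..n}. ?X k $$ (qbit n k r, qbit n k r)) = dd (qbit n j r)" .
  qed
  finally show ?thesis .
qed

definition cth :: complex where "cth = \<i> * complex_of_real (pi / (3 * sqrt 3))"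
definition Agen :: "nat \<Rightarrow> complex mat" where
  "Agen n = cth \<cdot>\<^sub>m mat_sum (2^n) n (\<lambda>j. of_nat j \<cdot>\<^sub>m Sj n j)"
definition dfun :: "nat \<Rightarrow> nat \<Rightarrow> complex" where
  "dfun n r = (\<Sum>j\<in>{1..n}. cth * of_nat j * dd (qbit n j r))"

lemma U_gate_Agen: "U_gate n = mat_exp (Agen n)"
  by (simp add: U_gate_def Agen_def cth_def Sj_def)

lemma Agen_carrier[simp]: "Agen n \<in> carrier_mat (2^n) (2^n)"
  unfolding Agen_def by (rule smult_carrier_mat, rule mat_sum_carrier) auto

lemma Agen_dim[simp]: "dim_row (Agen n) = 2^n" "dim_col (Agen n) = 2^n"
  using Agen_carrier[of n] unfolding carrier_mat_def by auto

lemma A_eq: "Agen n = WW n * diagmat (2^n) (dfun n) * VV n"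
proof (rule eq_matI)
  fix r c assume "r < dim_row (WW n * diagmat (2^n) (dfun n) * VV n)" "c < dim_col (WW n * diagmat (2^n) (dfun n) * VV n)"
  hence r: "r < 2^n" and c: "c < 2^n" by auto
  have msc: "mat_sum (2^n) n (\<lambda>j. of_nat j \<cdot>\<^sub>m Sj n j) \<in> carrier_mat (2^n) (2^n)"
    by (rule mat_sum_carrier) auto
  have "Agen n $$ (r,c) = cth * (\<Sum>j\<in>{1..n}. (of_nat j \<cdot>\<^sub>m Sj n j) $$ (r,c))"
    unfolding Agen_def using r c by (subst index_smult_mat(1)) (use msc in \<open>auto simp: mat_sum_index[of _ "2^n"]\<close>)
  also have "\<dots> = cth * (\<Sum>j\<in>{1..n}. of_nat j * (\<Sum>a<2^n. WW n $$ (r,a) * dd (qbit n j a) * VV n $$ (a,c)))"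
  proof (intro arg_cong[where f="(*) cth"] sum.cong refl)
    fix j assume j: "j \<in> {1..n}"
    have "Sj n j $$ (r,c) = (\<Sum>a<2^n. WW n $$ (r,a) * dd (qbit n j a) * VV n $$ (a,c))"
      unfolding Sj_eq[OF j] by (rule mult_diag_index) (use r c in auto)
    thus "(of_nat j \<cdot>\<^sub>m Sj n j) $$ (r,c) = of_nat j * (\<Sum>a<2^n. WW n $$ (r,a) * dd (qbit n j a) * VV n $$ (a,c))"
      using r c by simp
  qed
  also have "\<dots> = (\<Sum>a<2^n. \<Sum>j\<in>{1..n}. WW n $$ (r,a) * (cth * of_nat j * dd (qbit n j a)) * VV n $$ (a,c))"
    by (simp add: sum_distrib_left mult_ac) (rule sum.swap)
  also have "\<dots> = (\<Sum>a<2^n. WW n $$ (r,a) * dfun n a * VV n $$ (a,c))"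
    by (simp add: dfun_def sum_distrib_left sum_distrib_right)
  also have "\<dots> = (WW n * diagmat (2^n) (dfun n) * VV n) $$ (r,c)"
    by (rule mult_diag_index[symmetric]) (use r c in auto)
  finally show "Agen n $$ (r,c) = (WW n * diagmat (2^n) (dfun n) * VV n) $$ (r,c)" .
qed auto




lemma WWVV: "WW n * VV n = 1\<^sub>m (2^n)"
  unfolding VV_def WW_def by (subst prodmat_mult) (auto intro: prodmat_one simp: WV)

lemma A_pow: "Agen n ^\<^sub>m k = WW n * diagmat (2^n) (\<lambda>r. dfun n r ^ k) * VV n"
proof (induction k)
  case 0
  have "WW n * diagmat (2^n) (\<lambda>r. dfun n r ^ 0) * VV n = 1\<^sub>m (2^n)"
    by (simp add: diagmat_one WWVV)
  thus ?case by simp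
next
  case (Suc k)
  have "Agen n ^\<^sub>m Suc k = (WW n * diagmat (2^n) (\<lambda>r. dfun n r ^ k) * VV n) * (WW n * diagmat (2^n) (dfun n) * VV n)"
    by (simp add: Suc A_eq[symmetric])
  also have "\<dots> = WW n * (diagmat (2^n) (\<lambda>r. dfun n r ^ k) * diagmat (2^n) (dfun n)) * VV n"
    by (rule conj_cancel) (auto simp: VVWW)
  also have "\<dots> = WW n * diagmat (2^n) (\<lambda>r. dfun n r ^ Suc k) * VV n"
    by (simp add: diagmat_mult mult.commute)
  finally show ?case .
qed

lemma exp_series_c: "(\<lambda>k. x ^ k / of_nat (fact k)) sums exp (x::complex)"
proof -
  have "(\<lambda>k. x ^ k /\<^sub>R fact k) = (\<lambda>k. x ^ k / of_nat (fact k))"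
    by (rule ext) (simp add: scaleR_conv_of_real divide_inverse mult.commute)
  thus ?thesis using exp_converges[of x] by simp
qed

lemma U_exp: "U_gate n = WW n * diagmat (2^n) (\<lambda>r. exp (dfun n r)) * VV n"
proof (rule eq_matI)
  fix i j assume "i < dim_row (WW n * diagmat (2^n) (\<lambda>r. exp (dfun n r)) * VV n)"
     "j < dim_col (WW n * diagmat (2^n) (\<lambda>r. exp (dfun n r)) * VV n)"
  hence i: "i < 2^n" and j: "j < 2^n" by auto
  have pw: "(Agen n ^\<^sub>m k) $$ (i,j) = (\<Sum>a<2^n. WW n $$ (i,a) * dfun n a ^ k * VV n $$ (a,j))" for k
    unfolding A_pow by (rule mult_diag_index) (use i j in auto)
  have "(\<lambda>k. (Agen n ^\<^sub>m k) $$ (i,j) / of_nat (fact k)) sums (\<Sum>a<2^n. (WW n $$ (i,a) * VV n $$ (a,j)) * exp (dfun n a))"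
  proof -
    have "(\<lambda>k. \<Sum>a<2^n. (WW n $$ (i,a) * VV n $$ (a,j)) * (dfun n a ^ k / of_nat (fact k))) sums (\<Sum>a<2^n. (WW n $$ (i,a) * VV n $$ (a,j)) * exp (dfun n a))"
      by (intro sums_sum sums_mult exp_series_c)
    moreover have "(\<lambda>k. \<Sum>a<2^n. (WW n $$ (i,a) * VV n $$ (a,j)) * (dfun n a ^ k / of_nat (fact k))) = (\<lambda>k. (Agen n ^\<^sub>m k) $$ (i,j) / of_nat (fact k))"
      by (rule ext) (simp add: pw sum_divide_distrib mult_ac)
    ultimately show ?thesis by simp
  qed
  hence "U_gate n $$ (i,j) = (\<Sum>a<2^n. (WW n $$ (i,a) * VV n $$ (a,j)) * exp (dfun n a))"
    using i j by (simp add: U_gate_Agen mat_exp_def sums_iff)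
  also have "\<dots> = (WW n * diagmat (2^n) (\<lambda>r. exp (dfun n r)) * VV n) $$ (i,j)"
    by (subst mult_diag_index) (use i j in \<open>auto simp: mult_ac\<close>)
  finally show "U_gate n $$ (i,j) = (WW n * diagmat (2^n) (\<lambda>r. exp (dfun n r)) * VV n) $$ (i,j)" .
qed (simp_all add: U_gate_Agen mat_exp_def)




lemma cth_sq3: "cth * sq3 = \<i> * complex_of_real (pi / 3)"
proof -
  have "complex_of_real (pi / (3 * sqrt 3)) * complex_of_real (sqrt 3) = complex_of_real (pi / 3)"
    by (simp only: of_real_mult[symmetric]) (simp add: field_simps)
  thus ?thesis by (simp add: cth_def sq3_def mult.assoc)
qed

lemma exp_om: "exp (cth * sq3) = om" "exp (- (cth * sq3)) = cnj om"
proof -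
  have c: "cis (pi/3) = om" by (simp add: om_def sq3_def complex_eq_iff cos_60 sin_60)
  show "exp (cth * sq3) = om" unfolding cth_sq3 c[symmetric] cis_conv_exp ..
  have "exp (- (cth * sq3)) = cis (- (pi/3))" unfolding cth_sq3 cis_conv_exp by simp
  also have "\<dots> = cnj om" by (simp add: om_def sq3_def complex_eq_iff cos_60 sin_60)
  finally show "exp (- (cth * sq3)) = cnj om" .
qed

definition Ej :: "nat \<Rightarrow> complex mat" where "Ej j = mk2 (om ^ j) 0 0 (cnj om ^ j)"

lemma Ej_diag: "b < 2 \<Longrightarrow> Ej j $$ (b,b) = exp (cth * of_nat j * dd b)"
proof -
  assume b: "b < 2"
  have e1: "exp (cth * of_nat j * sq3) = om ^ j"
    using exp_of_nat_mult[of j "cth * sq3"] exp_om by (simp add: mult_ac)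
  have e2: "exp (cth * of_nat j * (- sq3)) = cnj om ^ j"
    using exp_of_nat_mult[of j "- (cth * sq3)"] exp_om by (simp add: mult_ac)
  show ?thesis using b e1 e2 by (auto simp: less2 Ej_def dd_def)
qed

lemma diag_exp: "diagmat (2^n) (\<lambda>r. exp (dfun n r)) = prodmat n Ej"
proof -
  have "prodmat n Ej = diagmat (2^n) (\<lambda>r. \<Prod>j\<in>{1..n}. Ej j $$ (qbit n j r, qbit n j r))"
    by (rule prodmat_diag) (auto simp: Ej_def)
  also have "(\<lambda>r. \<Prod>j\<in>{1..n}. Ej j $$ (qbit n j r, qbit n j r)) = (\<lambda>r. exp (dfun n r))"
    by (rule ext) (simp add: dfun_def exp_sum Ej_diag)
  finally show ?thesis by simp
qed

lemma U_prodmat: "U_gate n = prodmat n (\<lambda>j. u1 ^\<^sub>m j)"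
proof -
  have "U_gate n = WW n * prodmat n Ej * VV n" by (simp add: U_exp diag_exp)
  also have "\<dots> = prodmat n (\<lambda>j. Wm * Ej j * Vm)"
    unfolding WW_def VV_def
    by (subst prodmat_mult, auto simp: Ej_def, subst prodmat_mult, auto simp: mult_carrier_mat[of _ 2 2 _ 2])
  also have "\<dots> = prodmat n (\<lambda>j. u1 ^\<^sub>m j)"
    by (simp add: Ej_def WOV_pow)
  finally show ?thesis .
qed




lemma lie_closure_carrier:
  assumes "G \<subseteq> carrier_mat N N" "x \<in> lie_closure N G"
  shows "x \<in> carrier_mat N N"
  using assms(2)
proof (induction rule: lie_closure.induct)
  case (gen a) then show ?case using assms(1) by auto
next
  case zero then show ?case by simp
next
  case (add a b) then show ?case by simp
next
  case (smult a r) then show ?case by simp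
next
  case (bracket a b) then show ?case by (simp add: commutator_def minus_carrier_mat mult_carrier_mat)
qed

locale conjU =
  fixes U :: "complex mat" and N :: nat
  assumes U: "U \<in> carrier_mat N N" and UU: "U * adjoint U = 1\<^sub>m N" and UU': "adjoint U * U = 1\<^sub>m N"
begin

definition phi where "phi a = U * a * adjoint U"

lemma Ua: "adjoint U \<in> carrier_mat N N" using U by simp

lemma phi_carrier: "a \<in> carrier_mat N N \<Longrightarrow> phi a \<in> carrier_mat N N"
  using U Ua unfolding phi_def by (auto intro: mult_carrier_mat)

lemma phi_add: assumes a: "a \<in> carrier_mat N N" and b: "b \<in> carrier_mat N N" shows "phi (a + b) = phi a + phi b"
proof -
  have ua: "U * a \<in> carrier_mat N N" and ub: "U * b \<in> carrier_mat N N" using U a b by auto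
  show ?thesis unfolding phi_def mult_add_distrib_mat[OF U a b] add_mult_distrib_mat[OF ua ub Ua] ..
qed

lemma phi_smult: assumes a: "a \<in> carrier_mat N N" shows "phi (k \<cdot>\<^sub>m a) = k \<cdot>\<^sub>m phi a"
proof -
  have ua: "U * a \<in> carrier_mat N N" using U a by auto
  show ?thesis unfolding phi_def mult_smult_distrib[OF U a] mult_smult_assoc_mat[OF ua Ua] ..
qed

lemma phi_zero: "phi (0\<^sub>m N N) = 0\<^sub>m N N"
  unfolding phi_def using U Ua by simp

lemma phi_mult: "a \<in> carrier_mat N N \<Longrightarrow> b \<in> carrier_mat N N \<Longrightarrow> phi (a * b) = phi a * phi b"
proof -
  assume a: "a \<in> carrier_mat N N" and b: "b \<in> carrier_mat N N"
  have "phi a * phi b = U * (a * ((adjoint U * U) * (b * adjoint U)))"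
    unfolding phi_def using U Ua a b
    by (simp add: assoc_mult_mat[of _ N N _ N _ N] mult_carrier_mat[of _ N N _ N])
  also have "\<dots> = phi (a * b)"
    unfolding phi_def UU' using U Ua a b
    by (simp add: assoc_mult_mat[of _ N N _ N _ N] mult_carrier_mat[of _ N N _ N])
  finally show ?thesis ..
qed

lemma phi_minus: assumes a: "a \<in> carrier_mat N N" and b: "b \<in> carrier_mat N N" shows "phi (a - b) = phi a - phi b"
proof -
  have ua: "U * a \<in> carrier_mat N N" and ub: "U * b \<in> carrier_mat N N" using U a b by auto
  show ?thesis unfolding phi_def mult_minus_distrib_mat[OF U a b] minus_mult_distrib_mat[OF ua ub Ua] ..
qed

lemma phi_comm: "a \<in> carrier_mat N N \<Longrightarrow> b \<in> carrier_mat N N \<Longrightarrow> phi (commutator a b) = commutator (phi a) (phi b)"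
  unfolding commutator_def by (simp add: phi_minus phi_mult)

lemma phi_inv: "a \<in> carrier_mat N N \<Longrightarrow> adjoint U * phi a * U = a"
proof -
  assume a: "a \<in> carrier_mat N N"
  have "adjoint U * phi a * U = (adjoint U * U) * a * (adjoint U * U)"
    unfolding phi_def using U Ua a
    by (simp add: assoc_mult_mat[of _ N N _ N _ N] mult_carrier_mat[of _ N N _ N])
  thus ?thesis using a by (simp add: UU')
qed

lemma phi_inj: "inj_on phi (carrier_mat N N)"
  by (rule inj_onI) (metis phi_inv)

lemma image_sub:
  assumes G: "G \<subseteq> carrier_mat N N" and x: "x \<in> lie_closure N G"
  shows "phi x \<in> lie_closure N (phi ` G)"
  using x
proof (induction rule: lie_closure.induct)
  case (gen a) then show ?case by (auto intro: lie_closure.gen)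
next
  case zero then show ?case by (simp add: phi_zero lie_closure.zero)
next
  case (add a b) then show ?case
    using lie_closure_carrier[OF G] by (simp add: phi_add lie_closure.add)
next
  case (smult a r) then show ?case
    using lie_closure_carrier[OF G] by (simp add: phi_smult lie_closure.smult)
next
  case (bracket a b) then show ?case
    using lie_closure_carrier[OF G] by (simp add: phi_comm lie_closure.bracket)
qed

lemma image_sup:
  assumes G: "G \<subseteq> carrier_mat N N" and y: "y \<in> lie_closure N (phi ` G)"
  shows "\<exists>x\<in>lie_closure N G. y = phi x"
  using y
proof (induction rule: lie_closure.induct)
  case (gen a) then show ?case by (auto intro: lie_closure.gen)
next
  case zero then show ?case by (metis phi_zero lie_closure.zero)
next
  case (add a b)
  then obtain x1 x2 where "x1 \<in> lie_closure N G" "x2 \<in> lie_closure N G" "a = phi x1" "b = phi x2" by blast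
  thus ?case using lie_closure_carrier[OF G] by (metis phi_add lie_closure.add)
next
  case (smult a r)
  then obtain x1 where "x1 \<in> lie_closure N G" "a = phi x1" by blast
  thus ?case using lie_closure_carrier[OF G] by (metis phi_smult lie_closure.smult)
next
  case (bracket a b)
  then obtain x1 x2 where "x1 \<in> lie_closure N G" "x2 \<in> lie_closure N G" "a = phi x1" "b = phi x2" by blast
  thus ?case using lie_closure_carrier[OF G] by (metis phi_comm lie_closure.bracket)
qed

lemma phi_bij:
  assumes G: "G \<subseteq> carrier_mat N N" and G': "phi ` G = G'"
  shows "bij_betw phi (lie_closure N G) (lie_closure N G')"
proof (rule bij_betw_imageI)
  show "inj_on phi (lie_closure N G)"
    by (rule inj_on_subset[OF phi_inj]) (use lie_closure_carrier[OF G] in blast)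
  show "phi ` lie_closure N G = lie_closure N G'"
    using image_sub[OF G] image_sup[OF G] unfolding G'[symmetric] by blast
qed

end




lemma U_carrier: "U_gate n \<in> carrier_mat (2^n) (2^n)" by (simp add: U_prodmat)

lemma U_adj: "adjoint (U_gate n) = prodmat n (\<lambda>j. adjoint (u1 ^\<^sub>m j))"
  unfolding U_prodmat by (rule prodmat_adjoint) simp

lemma U_unit: "U_gate n * adjoint (U_gate n) = 1\<^sub>m (2^n)" "adjoint (U_gate n) * U_gate n = 1\<^sub>m (2^n)"
  unfolding U_adj by (subst U_prodmat, subst prodmat_mult, auto intro: prodmat_one simp: upow_unit1 upow_unit2)+

interpretation cU: conjU "U_gate n" "2^n"
  by unfold_locales (simp_all add: U_carrier U_unit)

lemma phi_ps: "cU.phi n (pauli_string n p) = pauli_string n (\<lambda>k. rot k (p k))"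
proof -
  have "cU.phi n (pauli_string n p) = prodmat n (\<lambda>j. u1 ^\<^sub>m j * pmat (p j) * adjoint (u1 ^\<^sub>m j))"
    unfolding cU.phi_def U_adj pauli_string_prodmat
    by (subst U_prodmat, subst prodmat_mult, auto, subst prodmat_mult, auto simp: mult_carrier_mat[of _ 2 2 _ 2])
  also have "\<dots> = pauli_string n (\<lambda>k. rot k (p k))"
    by (simp add: upow_conj pauli_string_prodmat)
  finally show ?thesis .
qed

lemma rot_Suc: "rot (Suc j) P = rot j (cyc P)"
  by (simp only: rot_def funpow_Suc_right o_apply)

lemma rot_perm: "{rot j PX, rot j PY, rot j PZ} = {PX, PY, PZ}"
proof (induction j)
  case 0 then show ?case by (simp add: rot_def)
next
  case (Suc j)
  have e: "rot (Suc j) P = cyc (rot j P)" for P by (simp add: rot_def)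
  have "{rot (Suc j) PX, rot (Suc j) PY, rot (Suc j) PZ} = cyc ` {rot j PX, rot j PY, rot j PZ}"
    by (simp add: e)
  also have "\<dots> = {PX, PY, PZ}" unfolding Suc by auto
  finally show ?case .
qed

lemma phi_two: "cU.phi n (two_site n A B j) = two_site n (rot j A) (rot (Suc j) B) j"
  unfolding two_site_def phi_ps by (rule arg_cong[where f="pauli_string n"], rule ext) auto

lemma two_site_carrier: "two_site n A B j \<in> carrier_mat (2^n) (2^n)"
  by (simp add: two_site_def)

lemma gens_j: "cU.phi n ` {two_site n PX PY j, two_site n PY PZ j, two_site n PZ PX j}
   = {two_site n PX PX j, two_site n PY PY j, two_site n PZ PZ j}"
proof -
  have "cU.phi n ` {two_site n PX PY j, two_site n PY PZ j, two_site n PZ PX j}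
     = (\<lambda>a. two_site n a a j) ` {rot j PX, rot j PY, rot j PZ}"
    by (simp add: phi_two rot_Suc)
  also have "\<dots> = {two_site n PX PX j, two_site n PY PY j, two_site n PZ PZ j}"
    unfolding rot_perm by simp
  finally show ?thesis .
qed

lemma gens: "cU.phi n ` ((\<lambda>P. \<i> \<cdot>\<^sub>m P) ` (\<Union>j\<in>{1..n-1}. {two_site n PX PY j, two_site n PY PZ j, two_site n PZ PX j}))
  = (\<lambda>P. \<i> \<cdot>\<^sub>m P) ` (\<Union>j\<in>{1..n-1}. {two_site n PX PX j, two_site n PY PY j, two_site n PZ PZ j})"
proof -
  have h: "cU.phi n ` ((\<lambda>P. \<i> \<cdot>\<^sub>m P) ` S) = (\<lambda>P. \<i> \<cdot>\<^sub>m P) ` (cU.phi n ` S)"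
    if "S \<subseteq> carrier_mat (2^n) (2^n)" for S
    using that by (auto simp: image_image cU.phi_smult subset_iff intro!: image_cong)
  have sub: "(\<Union>j\<in>{1..n-1}. {two_site n PX PY j, two_site n PY PZ j, two_site n PZ PX j}) \<subseteq> carrier_mat (2^n) (2^n)"
    by (auto simp: two_site_carrier)
  have "cU.phi n ` (\<Union>j\<in>{1..n-1}. {two_site n PX PY j, two_site n PY PZ j, two_site n PZ PX j})
     = (\<Union>j\<in>{1..n-1}. cU.phi n ` {two_site n PX PY j, two_site n PY PZ j, two_site n PZ PX j})"
    by (rule image_UN)
  also have "\<dots> = (\<Union>j\<in>{1..n-1}. {two_site n PX PX j, two_site n PY PY j, two_site n PZ PZ j})"
    by (simp only: gens_j)
  finally show ?thesis by (simp only: h[OF sub])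
qed




theorem mainTheorem13:
  fixes n :: nat
  assumes "n \<ge> 2"
  defines "U \<equiv> U_gate n"
  defines "\<phi> \<equiv> (\<lambda>a. U * a * adjoint U)"
  shows "bij_betw \<phi> (a10 n) (a7 n)
    \<and> (\<forall>a\<in>a10 n. \<forall>b\<in>a10 n. \<phi> (a + b) = \<phi> a + \<phi> b)
    \<and> (\<forall>a\<in>a10 n. \<forall>r::real. \<phi> (complex_of_real r \<cdot>\<^sub>m a) = complex_of_real r \<cdot>\<^sub>m \<phi> a)
    \<and> (\<forall>a\<in>a10 n. \<forall>b\<in>a10 n. \<phi> (commutator a b) = commutator (\<phi> a) (\<phi> b))"
proof -
  have pe: "\<phi> = cU.phi n" unfolding \<phi>_def U_def by (rule ext) (simp add: cU.phi_def)
  let ?G = "(\<lambda>P. \<i> \<cdot>\<^sub>m P) ` (\<Union>j\<in>{1..n-1}. {two_site n PX PY j, two_site n PY PZ j, two_site n PZ PX j})"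
  have G: "?G \<subseteq> carrier_mat (2^n) (2^n)" by (auto simp: two_site_carrier)
  have a10: "a10 n = lie_closure (2^n) ?G" by (simp add: a10_def pauli_lie_def)
  have a7: "a7 n = lie_closure (2^n) (cU.phi n ` ?G)" unfolding a7_def pauli_lie_def gens ..
  have car: "\<And>a. a \<in> a10 n \<Longrightarrow> a \<in> carrier_mat (2^n) (2^n)"
    unfolding a10 using lie_closure_carrier[OF G] by blast
  show ?thesis unfolding pe
  proof (intro conjI ballI allI)
    show "bij_betw (cU.phi n) (a10 n) (a7 n)" unfolding a10 a7 by (rule cU.phi_bij[OF G refl])
  next
    fix a b assume "a \<in> a10 n" "b \<in> a10 n"
    thus "cU.phi n (a + b) = cU.phi n a + cU.phi n b" by (intro cU.phi_add car)
  next
    fix a and r :: real assume "a \<in> a10 n"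
    thus "cU.phi n (complex_of_real r \<cdot>\<^sub>m a) = complex_of_real r \<cdot>\<^sub>m cU.phi n a" by (intro cU.phi_smult car)
  next
    fix a b assume "a \<in> a10 n" "b \<in> a10 n"
    thus "cU.phi n (commutator a b) = commutator (cU.phi n a) (cU.phi n b)" by (intro cU.phi_comm car)
  qed
qed


end
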